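(* Let $n\ge1$, $p$ a prime, $0\le i\le j\le n$, $L_0=(p^2\mathbb Z)^i\times(p\mathbb Z)^{j-i}\times\mathbb Z^{n-j}$, and let $B:\mathbb Z^n\to\mathbb C$ be a function such that $\sum_{A\in H_{i,j}\backslash\mathrm{GL}_n(\mathbb Z)}\sum_{\lambda\in L_0}B({}^tA\lambda)$ converges absolutely. Then \[ \sum_{A\in H_{i,j}\backslash\mathrm{GL}_n(\mathbb Z)}\sum_{\lambda\in L_0}B({}^tA\lambda)=a_0\sum_{\lambda\in\mathbb Z^n}B(\lambda)+a_1\sum_{\lambda\in\mathbb Z^n}B(p\lambda)+a_2\sum_{\lambda\in\mathbb Z^n}B(p^2\lambda), \] where $a_0,a_1,a_2$ are integers with $a_0+a_1+a_2=|H_{i,j}\backslash\mathrm{GL}_n(\mathbb Z)|$, $a_0+a_1=|H_{i,j}\backslash S_i|$ and $a_0=|H_{i,j}\backslash S_{i,j}|$.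
   Context: $\delta_{i,j}=\mathrm{diag}(1_i,p1_{j-i},p^21_{n-j})$; $H_{i,j}=\delta_{i,j}\mathrm{GL}_n(\mathbb Z)\delta_{i,j}^{-1}\cap\mathrm{GL}_n(\mathbb Z)$ acting by left multiplication. $S_i$ is the set of $A\in\mathrm{GL}_n(\mathbb Z)$ such that the first $i$ entries of the last row of $A^{-1}$ are divisible by $p$; $S_{i,j}$ is the set of $A\in\mathrm{GL}_n(\mathbb Z)$ such that in the last row of $A^{-1}$ the first $i$ entries are divisible by $p^2$ and the next $j-i$ are divisible by $p$. *)

theory Defs
  imports "HOL-Analysis.Infinite_Sum" "Jordan_Normal_Form.Matrix"
begin

(* Indices are 0-based: entry k of a vector / matrix row, k < n. *)

definition GLZ :: "nat \<Rightarrow> int mat set" where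
  "GLZ n = {A \<in> carrier_mat n n. invertible_mat A}"

definition delta :: "nat \<Rightarrow> nat \<Rightarrow> nat \<Rightarrow> nat \<Rightarrow> int mat" where
  "delta n p i j = mat n n (\<lambda>(k,l). if k = l then
      (if k < i then 1 else if k < j then int p else int p ^ 2) else 0)"

(* H_{i,j} = delta GL_n(Z) delta^{-1} \<inter> GL_n(Z);
   h \<in> delta GL_n(Z) delta^{-1}  iff  h * delta = delta * g for some g \<in> GL_n(Z) *)
definition Hgrp :: "nat \<Rightarrow> nat \<Rightarrow> nat \<Rightarrow> nat \<Rightarrow> int mat set" where
  "Hgrp n p i j = {h \<in> GLZ n. \<exists>g \<in> GLZ n. h * delta n p i j = delta n p i j * g}"

definition rcos :: "int mat set \<Rightarrow> int mat \<Rightarrow> int mat set" where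
  "rcos H A = (\<lambda>h. h * A) ` H"

definition cosets :: "int mat set \<Rightarrow> int mat set \<Rightarrow> int mat set set" where
  "cosets H X = rcos H ` X"

definition S1 :: "nat \<Rightarrow> nat \<Rightarrow> nat \<Rightarrow> int mat set" where
  "S1 n p i = {A \<in> GLZ n. \<exists>Ainv \<in> carrier_mat n n. A * Ainv = 1\<^sub>m n \<and> Ainv * A = 1\<^sub>m n \<and>
      (\<forall>k < i. int p dvd Ainv $$ (n - 1, k))}"

definition S2 :: "nat \<Rightarrow> nat \<Rightarrow> nat \<Rightarrow> nat \<Rightarrow> int mat set" where
  "S2 n p i j = {A \<in> GLZ n. \<exists>Ainv \<in> carrier_mat n n. A * Ainv = 1\<^sub>m n \<and> Ainv * A = 1\<^sub>m n \<and>
      (\<forall>k < i. int p ^ 2 dvd Ainv $$ (n - 1, k)) \<and>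
      (\<forall>k. i \<le> k \<and> k < j \<longrightarrow> int p dvd Ainv $$ (n - 1, k))}"

definition L0 :: "nat \<Rightarrow> nat \<Rightarrow> nat \<Rightarrow> nat \<Rightarrow> int vec set" where
  "L0 n p i j = {v \<in> carrier_vec n. (\<forall>k < i. int p ^ 2 dvd v $ k) \<and>
      (\<forall>k. i \<le> k \<and> k < j \<longrightarrow> int p dvd v $ k)}"

definition rep :: "int mat set \<Rightarrow> int mat" where
  "rep C = (SOME A. A \<in> C)"

end

theory Submission
  imports Defs "HOL-Computational_Algebra.Primes"
begin


definition dg :: "nat \<Rightarrow> (nat \<Rightarrow> int) \<Rightarrow> int mat" where
  "dg n f = mat n n (\<lambda>(k,l). if k = l then f k else 0)"

lemma dg_carrier[simp]: "dg n f \<in> carrier_mat n n" by (simp add: dg_def)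

lemma dg_mult_left:
  assumes "M \<in> carrier_mat n m" "k < n" "l < m"
  shows "(dg n f * M) $$ (k,l) = f k * M $$ (k,l)"
proof -
  have "(dg n f * M) $$ (k,l) = (\<Sum>t\<in>{0..<n}. (if t = k then f k else 0) * M $$ (t,l))"
    using assms by (auto simp: dg_def scalar_prod_def intro!: sum.cong)
  also have "\<dots> = (\<Sum>t\<in>{0..<n}. if t = k then f k * M $$ (t,l) else 0)"
    by (rule sum.cong) auto
  also have "\<dots> = f k * M $$ (k,l)" using assms by simp
  finally show ?thesis .
qed

lemma dg_mult_right:
  assumes "M \<in> carrier_mat m n" "k < m" "l < n"
  shows "(M * dg n f) $$ (k,l) = M $$ (k,l) * f l"
proof -
  have "(M * dg n f) $$ (k,l) = (\<Sum>t\<in>{0..<n}. M $$ (k,t) * (if t = l then f l else 0))"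
    using assms by (auto simp: dg_def scalar_prod_def intro!: sum.cong)
  also have "\<dots> = (\<Sum>t\<in>{0..<n}. if t = l then M $$ (k,t) * f l else 0)"
    by (rule sum.cong) auto
  also have "\<dots> = M $$ (k,l) * f l" using assms by simp
  finally show ?thesis .
qed

lemma dg_mult_vec:
  assumes "v \<in> carrier_vec n" "k < n"
  shows "(dg n f *\<^sub>v v) $ k = f k * v $ k"
proof -
  have "(dg n f *\<^sub>v v) $ k = (\<Sum>t\<in>{0..<n}. (if k = t then f k else 0) * v $ t)"
    using assms by (auto simp: dg_def scalar_prod_def intro!: sum.cong)
  also have "\<dots> = (\<Sum>t\<in>{0..<n}. if t = k then f k * v $ t else 0)"
    by (rule sum.cong) auto
  also have "\<dots> = f k * v $ k" using assms by simp
  finally show ?thesis .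
qed

lemma dg_transpose[simp]: "transpose_mat (dg n f) = dg n f"
  by (rule eq_matI) (auto simp: dg_def)

definition dd :: "nat \<Rightarrow> nat \<Rightarrow> nat \<Rightarrow> nat \<Rightarrow> int" where
  "dd p i j k = (if k < i then 1 else if k < j then int p else int p ^ 2)"

lemma delta_dg: "delta n p i j = dg n (dd p i j)"
  by (rule eq_matI) (auto simp: delta_def dg_def dd_def)

lemma dd_nz: "p > 0 \<Longrightarrow> dd p i j k \<noteq> 0" by (auto simp: dd_def)

lemma dd_dvd: "dd p i j k dvd int p ^ 2" by (auto simp: dd_def)

lemma dg_cancel:
  assumes "M \<in> carrier_mat n m" "N \<in> carrier_mat n m" "\<And>k. k < n \<Longrightarrow> f k \<noteq> 0"
    "dg n f * M = dg n f * N"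
  shows "M = N"
proof (rule eq_matI)
  fix k l assume kl: "k < dim_row N" "l < dim_col N"
  have "(dg n f * M) $$ (k,l) = (dg n f * N) $$ (k,l)" using assms(4) by simp
  then have "f k * M $$ (k,l) = f k * N $$ (k,l)"
    using dg_mult_left[OF assms(1), of k l f] dg_mult_left[OF assms(2), of k l f] assms kl by simp
  then show "M $$ (k,l) = N $$ (k,l)" using assms kl by simp
qed (use assms in auto)

lemma GLZ_carrier: "A \<in> GLZ n \<Longrightarrow> A \<in> carrier_mat n n" by (simp add: GLZ_def)

lemma GLZ_inv:
  assumes "A \<in> GLZ n"
  shows "\<exists>Ai \<in> carrier_mat n n. A * Ai = 1\<^sub>m n \<and> Ai * A = 1\<^sub>m n"
proof -
  have A: "A \<in> carrier_mat n n" using assms by (simp add: GLZ_def)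
  then obtain B where B: "A * B = 1\<^sub>m n" "B * A = 1\<^sub>m (dim_row B)"
    using assms unfolding GLZ_def invertible_mat_def inverts_mat_def by auto
  have "dim_row B = n"
    using arg_cong[OF B(2), of dim_col] A by simp
  moreover have "dim_col B = n" using arg_cong[OF B(1), of dim_col] by simp
  ultimately show ?thesis using B by (auto intro!: bexI[of _ B])
qed

lemma GLZ_I:
  assumes "A \<in> carrier_mat n n" "Ai \<in> carrier_mat n n" "A * Ai = 1\<^sub>m n" "Ai * A = 1\<^sub>m n"
  shows "A \<in> GLZ n"
  using assms unfolding GLZ_def invertible_mat_def inverts_mat_def square_mat.simps
  by (auto intro!: exI[of _ Ai])

lemma inv_unique:
  fixes A :: "int mat"
  assumes "A \<in> carrier_mat n n" "Ai \<in> carrier_mat n n" "Bi \<in> carrier_mat n n"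
    "A * Ai = 1\<^sub>m n" "Bi * A = 1\<^sub>m n"
  shows "Bi = Ai"
proof -
  have "Bi = Bi * (A * Ai)" using assms by (simp add: right_mult_one_mat[OF assms(3)])
  also have "\<dots> = (Bi * A) * Ai" using assoc_mult_mat[OF assms(3,1,2)] by simp
  also have "\<dots> = Ai" using assms by simp
  finally show ?thesis .
qed

lemma GLZ_mult:
  assumes "A \<in> GLZ n" "B \<in> GLZ n" shows "A * B \<in> GLZ n"
proof -
  obtain Ai where Ai: "Ai \<in> carrier_mat n n" "A * Ai = 1\<^sub>m n" "Ai * A = 1\<^sub>m n" using GLZ_inv[OF assms(1)] by auto
  obtain Bi where Bi: "Bi \<in> carrier_mat n n" "B * Bi = 1\<^sub>m n" "Bi * B = 1\<^sub>m n" using GLZ_inv[OF assms(2)] by auto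
  have A: "A \<in> carrier_mat n n" and B: "B \<in> carrier_mat n n" using assms GLZ_carrier by auto
  have "(A * B) * (Bi * Ai) = A * (B * (Bi * Ai))" using assoc_mult_mat[OF A B, of "Bi*Ai" n] Ai Bi by simp
  also have "B * (Bi * Ai) = (B * Bi) * Ai" using assoc_mult_mat[OF B Bi(1) Ai(1)] by simp
  also have "\<dots> = Ai" using Ai Bi by simp
  finally have 1: "(A * B) * (Bi * Ai) = 1\<^sub>m n" using Ai by simp
  have "(Bi * Ai) * (A * B) = Bi * (Ai * (A * B))" using assoc_mult_mat[OF Bi(1) Ai(1), of "A*B" n] A B by simp
  also have "Ai * (A * B) = (Ai * A) * B" using assoc_mult_mat[OF Ai(1) A B] by simp
  also have "\<dots> = B" using B Ai by simp
  finally have 2: "(Bi * Ai) * (A * B) = 1\<^sub>m n" using Bi by simp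
  show ?thesis by (rule GLZ_I[OF _ _ 1 2]) (use A B Ai Bi in auto)
qed

lemma GLZ_inv_in:
  assumes "A \<in> carrier_mat n n" "Ai \<in> carrier_mat n n" "A * Ai = 1\<^sub>m n" "Ai * A = 1\<^sub>m n"
  shows "Ai \<in> GLZ n" using GLZ_I[OF assms(2,1,4,3)] .

lemma one_GLZ: "1\<^sub>m n \<in> GLZ n" by (rule GLZ_I[of _ _ "1\<^sub>m n"]) auto

lemma assoc_nn: "(A::int mat) \<in> carrier_mat n n \<Longrightarrow> B \<in> carrier_mat n n \<Longrightarrow> C \<in> carrier_mat n n \<Longrightarrow> A * B * C = A * (B * C)"
  by (rule assoc_mult_mat)

lemma H_GLZ: "h \<in> Hgrp n p i j \<Longrightarrow> h \<in> GLZ n" by (simp add: Hgrp_def)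

lemma one_H: "1\<^sub>m n \<in> Hgrp n p i j"
  unfolding Hgrp_def using one_GLZ
  by (auto intro!: bexI[of _ "1\<^sub>m n"] simp: delta_def)

lemma H_mult:
  assumes "h1 \<in> Hgrp n p i j" "h2 \<in> Hgrp n p i j" shows "h1 * h2 \<in> Hgrp n p i j"
proof -
  let ?d = "delta n p i j"
  have d: "?d \<in> carrier_mat n n" by (simp add: delta_def)
  obtain g1 where g1: "g1 \<in> GLZ n" "h1 * ?d = ?d * g1" using assms(1) by (auto simp: Hgrp_def)
  obtain g2 where g2: "g2 \<in> GLZ n" "h2 * ?d = ?d * g2" using assms(2) by (auto simp: Hgrp_def)
  have c: "h1 \<in> carrier_mat n n" "h2 \<in> carrier_mat n n" "g1 \<in> carrier_mat n n" "g2 \<in> carrier_mat n n"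
    using assms g1 g2 H_GLZ GLZ_carrier by blast+
  have "h1 * h2 * ?d = h1 * (h2 * ?d)" using assoc_nn[OF c(1,2) d] .
  also have "\<dots> = (h1 * ?d) * g2" using g2 assoc_nn[OF c(1) d c(4)] by simp
  also have "\<dots> = ?d * (g1 * g2)" using g1 assoc_nn[OF d c(3,4)] by simp
  finally show ?thesis unfolding Hgrp_def
    using GLZ_mult[OF H_GLZ[OF assms(1)] H_GLZ[OF assms(2)]] GLZ_mult[OF g1(1) g2(1)] by auto
qed

lemma H_inv:
  assumes "h \<in> Hgrp n p i j" "hi \<in> carrier_mat n n" "h * hi = 1\<^sub>m n" "hi * h = 1\<^sub>m n"
  shows "hi \<in> Hgrp n p i j"
proof -
  let ?d = "delta n p i j"
  have d: "?d \<in> carrier_mat n n" by (simp add: delta_def)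
  obtain g where g: "g \<in> GLZ n" "h * ?d = ?d * g" using assms(1) by (auto simp: Hgrp_def)
  obtain gi where gi: "gi \<in> carrier_mat n n" "g * gi = 1\<^sub>m n" "gi * g = 1\<^sub>m n" using GLZ_inv[OF g(1)] by auto
  have c: "h \<in> carrier_mat n n" "g \<in> carrier_mat n n"
    using assms g H_GLZ GLZ_carrier by blast+
  have "?d * gi = (hi * h) * ?d * gi" using assms(4) d by simp
  also have "\<dots> = hi * (h * ?d) * gi" using assoc_nn[OF assms(2) c(1) d] by simp
  also have "\<dots> = hi * ?d * (g * gi)" using g assoc_nn[OF assms(2) d c(2)] assoc_nn[OF _ c(2) gi(1), of "hi * ?d"] assms(2) d by simp
  also have "\<dots> = hi * ?d" using gi assms(2) d by simp
  finally have "hi * ?d = ?d * gi" by simp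
  moreover have "gi \<in> GLZ n" using GLZ_inv_in[OF c(2) gi] .
  moreover have "hi \<in> GLZ n" using GLZ_inv_in[OF c(1) assms(2-4)] .
  ultimately show ?thesis unfolding Hgrp_def by auto
qed

lemma L0_iff:
  assumes "p > 0" "i \<le> j" "j \<le> n"
  shows "v \<in> L0 n p i j \<longleftrightarrow> v \<in> carrier_vec n \<and> (\<forall>k < n. int p ^ 2 dvd dd p i j k * v $ k)"
proof -
  have "int p ^ 2 dvd int p * x \<longleftrightarrow> int p dvd x" for x :: int
    using assms by (simp add: power2_eq_square)
  then show ?thesis unfolding L0_def dd_def
  proof (auto simp: not_less, goal_cases)
    case (1 k) then show ?case using assms by (metis less_le_trans not_less)
  next
    case (2 k) then show ?case using assms by (metis less_le_trans not_less)
  qed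
qed

lemma dvd_mult_vec:
  assumes "M \<in> carrier_mat m n" "w \<in> carrier_vec n" "\<And>k. k < n \<Longrightarrow> c dvd w $ k" "k < m"
  shows "(c::int) dvd (M *\<^sub>v w) $ k"
  using assms by (auto simp: scalar_prod_def intro!: dvd_sum)

lemma L0_iff':
  assumes "p > 0" "i \<le> j" "j \<le> n"
  shows "v \<in> L0 n p i j \<longleftrightarrow> v \<in> carrier_vec n \<and> (\<forall>k < n. int p ^ 2 dvd (delta n p i j *\<^sub>v v) $ k)"
  using L0_iff[OF assms] by (auto simp: delta_dg dg_mult_vec)

lemma H_transpose_L0:
  assumes "p > 0" "i \<le> j" "j \<le> n" "h \<in> Hgrp n p i j" "v \<in> L0 n p i j"
  shows "transpose_mat h *\<^sub>v v \<in> L0 n p i j"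
proof -
  let ?d = "delta n p i j"
  have d: "?d \<in> carrier_mat n n" by (simp add: delta_def)
  obtain g where g: "g \<in> GLZ n" "h * ?d = ?d * g" using assms(4) by (auto simp: Hgrp_def)
  have c: "h \<in> carrier_mat n n" "g \<in> carrier_mat n n" using assms g H_GLZ GLZ_carrier by blast+
  have v: "v \<in> carrier_vec n" "\<forall>k < n. int p ^ 2 dvd (?d *\<^sub>v v) $ k" using L0_iff'[OF assms(1-3)] assms(5) by auto
  have dT: "transpose_mat ?d = ?d" by (simp add: delta_dg)
  have "?d * transpose_mat h = transpose_mat (h * ?d)"
    using transpose_mult[OF c(1) d] dT by simp
  also have "\<dots> = transpose_mat g * ?d" using g(2) transpose_mult[OF d c(2)] dT by simp
  finally have e: "?d * transpose_mat h = transpose_mat g * ?d" .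
  have "?d *\<^sub>v (transpose_mat h *\<^sub>v v) = (?d * transpose_mat h) *\<^sub>v v"
    using assoc_mult_mat_vec[OF d, of "transpose_mat h" n v] c v by simp
  also have "\<dots> = transpose_mat g *\<^sub>v (?d *\<^sub>v v)" using e assoc_mult_mat_vec[of "transpose_mat g" n n ?d n v] c d v by simp
  finally have e2: "?d *\<^sub>v (transpose_mat h *\<^sub>v v) = transpose_mat g *\<^sub>v (?d *\<^sub>v v)" .
  have "k < n \<Longrightarrow> int p ^ 2 dvd (transpose_mat g *\<^sub>v (?d *\<^sub>v v)) $ k" for k
    by (rule dvd_mult_vec[of _ n n]) (use v c d in auto)
  then have "\<forall>k<n. int p ^ 2 dvd (?d *\<^sub>v (transpose_mat h *\<^sub>v v)) $ k"
    unfolding e2 by blast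
  then show ?thesis using L0_iff'[OF assms(1-3)] c v by auto
qed

definition P :: "nat \<Rightarrow> nat \<Rightarrow> nat \<Rightarrow> nat \<Rightarrow> int vec \<Rightarrow> int mat \<Rightarrow> bool" where
  "P n p i j mu A \<longleftrightarrow> mu \<in> (\<lambda>v. transpose_mat A *\<^sub>v v) ` L0 n p i j"

lemma L0_carrier: "v \<in> L0 n p i j \<Longrightarrow> v \<in> carrier_vec n" by (simp add: L0_def)

lemma transpose_mult_vec:
  assumes "(h::int mat) \<in> carrier_mat n n" "A \<in> carrier_mat n n" "v \<in> carrier_vec n"
  shows "transpose_mat (h * A) *\<^sub>v v = transpose_mat A *\<^sub>v (transpose_mat h *\<^sub>v v)"
  using transpose_mult[OF assms(1,2)] assoc_mult_mat_vec[of "transpose_mat A" n n "transpose_mat h" n v] assms by simp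

lemma P_H:
  assumes "p > 0" "i \<le> j" "j \<le> n" "h \<in> Hgrp n p i j" "A \<in> carrier_mat n n"
  shows "P n p i j mu (h * A) \<longleftrightarrow> P n p i j mu A"
proof
  have c: "h \<in> carrier_mat n n" using assms H_GLZ GLZ_carrier by blast
  assume "P n p i j mu (h * A)"
  then obtain v where v: "v \<in> L0 n p i j" "mu = transpose_mat (h * A) *\<^sub>v v" by (auto simp: P_def)
  then have "mu = transpose_mat A *\<^sub>v (transpose_mat h *\<^sub>v v)"
    using transpose_mult_vec[OF c assms(5) L0_carrier[OF v(1)]] by simp
  then show "P n p i j mu A" unfolding P_def using H_transpose_L0[OF assms(1-4) v(1)] by auto
next
  have c: "h \<in> carrier_mat n n" using assms H_GLZ GLZ_carrier by blast
  obtain hi where hi: "hi \<in> carrier_mat n n" "h * hi = 1\<^sub>m n" "hi * h = 1\<^sub>m n"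
    using GLZ_inv[OF H_GLZ[OF assms(4)]] by auto
  have hiH: "hi \<in> Hgrp n p i j" using H_inv[OF assms(4) hi] .
  assume "P n p i j mu A"
  then obtain v where v: "v \<in> L0 n p i j" "mu = transpose_mat A *\<^sub>v v" by (auto simp: P_def)
  have vc: "v \<in> carrier_vec n" using L0_carrier[OF v(1)] .
  let ?w = "transpose_mat hi *\<^sub>v v"
  have w: "?w \<in> L0 n p i j" using H_transpose_L0[OF assms(1-3) hiH v(1)] .
  have "transpose_mat h *\<^sub>v ?w = transpose_mat (hi * h) *\<^sub>v v"
    using transpose_mult_vec[OF hi(1) c vc] by simp
  also have "\<dots> = v" using hi vc by simp
  finally have "transpose_mat (h * A) *\<^sub>v ?w = mu"
    using transpose_mult_vec[OF c assms(5) L0_carrier[OF w]] v by simp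
  then show "P n p i j mu (h * A)" unfolding P_def using w by force
qed

lemma rcos_self: "A \<in> carrier_mat n n \<Longrightarrow> A \<in> rcos (Hgrp n p i j) A"
  unfolding rcos_def using one_H[of n p i j] by (auto intro!: image_eqI[of _ _ "1\<^sub>m n"])

lemma rcos_carrier: "A \<in> carrier_mat n n \<Longrightarrow> rcos (Hgrp n p i j) A \<subseteq> carrier_mat n n"
  unfolding rcos_def using H_GLZ GLZ_carrier by fastforce

lemma rcos_GLZ: "A \<in> GLZ n \<Longrightarrow> rcos (Hgrp n p i j) A \<subseteq> GLZ n"
  unfolding rcos_def using H_GLZ GLZ_mult by fastforce

lemma rcos_eq:
  assumes "A \<in> carrier_mat n n" "B \<in> rcos (Hgrp n p i j) A"
  shows "rcos (Hgrp n p i j) B = rcos (Hgrp n p i j) A"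
proof -
  obtain h where h: "h \<in> Hgrp n p i j" "B = h * A" using assms(2) by (auto simp: rcos_def)
  have hc: "h \<in> carrier_mat n n" using h H_GLZ GLZ_carrier by blast
  obtain hi where hi: "hi \<in> carrier_mat n n" "h * hi = 1\<^sub>m n" "hi * h = 1\<^sub>m n"
    using GLZ_inv[OF H_GLZ[OF h(1)]] by auto
  have hiH: "hi \<in> Hgrp n p i j" using H_inv[OF h(1) hi] .
  show ?thesis
  proof
    show "rcos (Hgrp n p i j) B \<subseteq> rcos (Hgrp n p i j) A"
    proof
      fix X assume "X \<in> rcos (Hgrp n p i j) B"
      then obtain h' where h': "h' \<in> Hgrp n p i j" "X = h' * B" by (auto simp: rcos_def)
      have "h' \<in> carrier_mat n n" using h' H_GLZ GLZ_carrier by blast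
      then have "X = (h' * h) * A" using h h' assoc_nn[OF _ hc assms(1)] by simp
      then show "X \<in> rcos (Hgrp n p i j) A" unfolding rcos_def using H_mult[OF h'(1) h(1)] by auto
    qed
  next
    show "rcos (Hgrp n p i j) A \<subseteq> rcos (Hgrp n p i j) B"
    proof
      fix X assume "X \<in> rcos (Hgrp n p i j) A"
      then obtain h' where h': "h' \<in> Hgrp n p i j" "X = h' * A" by (auto simp: rcos_def)
      have h'c: "h' \<in> carrier_mat n n" using h' H_GLZ GLZ_carrier by blast
      have "(h' * hi) * B = h' * (hi * h * A)" using h assoc_nn[OF h'c hi(1), of B] assoc_nn[OF hi(1) hc assms(1)] hc assms(1) by simp
      also have "\<dots> = X" using hi h' assms(1) by simp
      finally show "X \<in> rcos (Hgrp n p i j) B" unfolding rcos_def using H_mult[OF h'(1) hiH] by force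
    qed
  qed
qed

lemma rep_mem:
  assumes "X \<subseteq> carrier_mat n n" "C \<in> cosets (Hgrp n p i j) X"
  shows "rep C \<in> C" "C = rcos (Hgrp n p i j) (rep C)"
proof -
  obtain A where A: "A \<in> X" "C = rcos (Hgrp n p i j) A" using assms(2) by (auto simp: cosets_def)
  have "A \<in> C" using A rcos_self assms(1) by blast
  then show 1: "rep C \<in> C" unfolding rep_def by (rule someI)
  show "C = rcos (Hgrp n p i j) (rep C)" using rcos_eq[of A n, OF _ 1[unfolded A(2)]] A assms(1) by auto
qed

lemma cosets_Q:
  assumes "\<And>h A. h \<in> Hgrp n p i j \<Longrightarrow> A \<in> GLZ n \<Longrightarrow> Q (h * A) \<longleftrightarrow> Q A"
  shows "{C \<in> cosets (Hgrp n p i j) (GLZ n). Q (rep C)} = cosets (Hgrp n p i j) {A \<in> GLZ n. Q A}"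
proof
  have sub: "GLZ n \<subseteq> carrier_mat n n" using GLZ_carrier by blast
  show "{C \<in> cosets (Hgrp n p i j) (GLZ n). Q (rep C)} \<subseteq> cosets (Hgrp n p i j) {A \<in> GLZ n. Q A}"
  proof clarify
    fix C assume C: "C \<in> cosets (Hgrp n p i j) (GLZ n)" "Q (rep C)"
    obtain A where A: "A \<in> GLZ n" "C = rcos (Hgrp n p i j) A" using C by (auto simp: cosets_def)
    have "rep C \<in> GLZ n" using rep_mem(1)[OF sub C(1)] rcos_GLZ[OF A(1)] A by auto
    then show "C \<in> cosets (Hgrp n p i j) {A \<in> GLZ n. Q A}"
      using rep_mem(2)[OF sub C(1)] C(2) unfolding cosets_def by auto
  qed
next
  have sub: "GLZ n \<subseteq> carrier_mat n n" using GLZ_carrier by blast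
  show "cosets (Hgrp n p i j) {A \<in> GLZ n. Q A} \<subseteq> {C \<in> cosets (Hgrp n p i j) (GLZ n). Q (rep C)}"
  proof clarify
    fix C assume C: "C \<in> cosets (Hgrp n p i j) {A \<in> GLZ n. Q A}"
    obtain A where A: "A \<in> GLZ n" "Q A" "C = rcos (Hgrp n p i j) A" using C by (auto simp: cosets_def)
    have C': "C \<in> cosets (Hgrp n p i j) (GLZ n)" using A unfolding cosets_def by auto
    obtain h where "h \<in> Hgrp n p i j" "rep C = h * A" using rep_mem(1)[OF sub C'] A(3) by (auto simp: rcos_def)
    then have "Q (rep C)" using assms A by auto
    then show "C \<in> cosets (Hgrp n p i j) (GLZ n) \<and> Q (rep C)" using C' by auto
  qed
qed

lemma cosets_rmult:
  assumes "M \<in> carrier_mat n n" "Mi \<in> carrier_mat n n" "M * Mi = 1\<^sub>m n" "X \<subseteq> carrier_mat n n"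
  shows "card (cosets (Hgrp n p i j) ((\<lambda>A. A * M) ` X)) = card (cosets (Hgrp n p i j) X)"
proof -
  let ?H = "Hgrp n p i j"
  let ?phi = "\<lambda>C. (\<lambda>A. A * M) ` C"
  have r: "rcos ?H (A * M) = ?phi (rcos ?H A)" if "A \<in> carrier_mat n n" for A
  proof -
    have "h * (A * M) = h * A * M" if "h \<in> ?H" for h
      using assoc_nn[of h n A M] that H_GLZ GLZ_carrier \<open>A \<in> carrier_mat n n\<close> assms(1) by auto
    then show ?thesis unfolding rcos_def by (auto simp: image_image)
  qed
  have e: "cosets ?H ((\<lambda>A. A * M) ` X) = ?phi ` cosets ?H X"
    unfolding cosets_def using r assms(4) by (auto simp: image_image)
  have inj: "inj_on ?phi (cosets ?H X)"
  proof (rule inj_onI)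
    fix C D assume CD: "C \<in> cosets ?H X" "D \<in> cosets ?H X" "?phi C = ?phi D"
    have bk: "(\<lambda>B. B * Mi) ` ?phi E = E" if "E \<subseteq> carrier_mat n n" for E
    proof -
      have "A * M * Mi = A" if "A \<in> carrier_mat n n" for A
        using assoc_nn[OF that assms(1,2)] assms(3) that by simp
      then show ?thesis using that by (force simp: image_image)
    qed
    have "C \<subseteq> carrier_mat n n" "D \<subseteq> carrier_mat n n"
      using CD rcos_carrier assms(4) unfolding cosets_def by blast+
    then show "C = D" using bk CD(3) by metis
  qed
  show ?thesis using e card_image[OF inj] by simp
qed

lemma GLZ_transpose: "A \<in> GLZ n \<Longrightarrow> transpose_mat A \<in> GLZ n"
proof -
  assume A: "A \<in> GLZ n"
  obtain Ai where Ai: "Ai \<in> carrier_mat n n" "A * Ai = 1\<^sub>m n" "Ai * A = 1\<^sub>m n" using GLZ_inv[OF A] by auto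
  have c: "A \<in> carrier_mat n n" using A GLZ_carrier by blast
  have "transpose_mat A * transpose_mat Ai = 1\<^sub>m n" using transpose_mult[OF Ai(1) c] Ai by simp
  moreover have "transpose_mat Ai * transpose_mat A = 1\<^sub>m n" using transpose_mult[OF c Ai(1)] Ai by simp
  ultimately show ?thesis using GLZ_I[of "transpose_mat A" n "transpose_mat Ai"] c Ai by simp
qed

lemma P_W:
  assumes "A \<in> carrier_mat n n" "W \<in> carrier_mat n n" "Wi \<in> carrier_mat n n" "Wi * W = 1\<^sub>m n"
    "mu \<in> carrier_vec n"
  shows "P n p i j (W *\<^sub>v mu) (A * transpose_mat W) \<longleftrightarrow> P n p i j mu A"
proof -
  have tr: "transpose_mat (A * transpose_mat W) = W * transpose_mat A"
    using transpose_mult[OF assms(1), of "transpose_mat W" n] assms(2) by simp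
  have e: "transpose_mat (A * transpose_mat W) *\<^sub>v v = W *\<^sub>v (transpose_mat A *\<^sub>v v)" if "v \<in> carrier_vec n" for v
    unfolding tr using assoc_mult_mat_vec[OF assms(2), of "transpose_mat A" n v] assms that by simp
  have inj: "W *\<^sub>v x = W *\<^sub>v y \<longleftrightarrow> x = y" if "x \<in> carrier_vec n" "y \<in> carrier_vec n" for x y
  proof
    assume "W *\<^sub>v x = W *\<^sub>v y"
    then have "Wi *\<^sub>v (W *\<^sub>v x) = Wi *\<^sub>v (W *\<^sub>v y)" by simp
    then show "x = y" using assoc_mult_mat_vec[OF assms(3,2)] assms(4) that by simp
  qed simp
  show ?thesis unfolding P_def
    using e inj L0_carrier assms(1,5) by (auto simp: image_iff)
qed

lemma count_W:
  assumes "W \<in> GLZ n" "mu \<in> carrier_vec n"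
  shows "card (cosets (Hgrp n p i j) {A \<in> GLZ n. P n p i j (W *\<^sub>v mu) A})
       = card (cosets (Hgrp n p i j) {A \<in> GLZ n. P n p i j mu A})"
proof -
  obtain Wi where Wi: "Wi \<in> carrier_mat n n" "W * Wi = 1\<^sub>m n" "Wi * W = 1\<^sub>m n" using GLZ_inv[OF assms(1)] by auto
  have Wc: "W \<in> carrier_mat n n" using assms GLZ_carrier by blast
  have WT: "transpose_mat W \<in> GLZ n" using GLZ_transpose[OF assms(1)] .
  have WiT: "transpose_mat Wi \<in> GLZ n" using GLZ_transpose[OF GLZ_inv_in[OF Wc Wi]] .
  have TT: "transpose_mat Wi * transpose_mat W = 1\<^sub>m n" using transpose_mult[OF Wc Wi(1)] Wi by simp
  have eq: "{A \<in> GLZ n. P n p i j (W *\<^sub>v mu) A} = (\<lambda>A. A * transpose_mat W) ` {A \<in> GLZ n. P n p i j mu A}"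
  proof
    show "{A \<in> GLZ n. P n p i j (W *\<^sub>v mu) A} \<subseteq> (\<lambda>A. A * transpose_mat W) ` {A \<in> GLZ n. P n p i j mu A}"
    proof clarify
      fix A assume A: "A \<in> GLZ n" "P n p i j (W *\<^sub>v mu) A"
      have Ac: "A \<in> carrier_mat n n" using A GLZ_carrier by blast
      let ?B = "A * transpose_mat Wi"
      have B: "?B \<in> GLZ n" using GLZ_mult[OF A(1) WiT] .
      have "?B * transpose_mat W = A * (transpose_mat Wi * transpose_mat W)"
        using assoc_nn[OF Ac, of "transpose_mat Wi" "transpose_mat W"] Wi Wc by simp
      then have BA: "?B * transpose_mat W = A" using TT Ac by simp
      have "P n p i j mu ?B" using P_W[OF GLZ_carrier[OF B] Wc Wi(1) Wi(3) assms(2)] BA A by simp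
      then show "A \<in> (\<lambda>A. A * transpose_mat W) ` {A \<in> GLZ n. P n p i j mu A}"
        using B BA by (intro image_eqI[of A _ ?B]) auto
    qed
  next
    show "(\<lambda>A. A * transpose_mat W) ` {A \<in> GLZ n. P n p i j mu A} \<subseteq> {A \<in> GLZ n. P n p i j (W *\<^sub>v mu) A}"
      using P_W[OF _ Wc Wi(1) Wi(3) assms(2)] GLZ_mult[OF _ WT] GLZ_carrier by auto
  qed
  show ?thesis unfolding eq
    by (rule cosets_rmult[of _ n "transpose_mat Wi"]) (use Wc Wi TT WiT GLZ_carrier transpose_mult[OF Wi(1) Wc] in auto)
qed



definition E :: "nat \<Rightarrow> nat \<Rightarrow> nat \<Rightarrow> int \<Rightarrow> int mat" where
  "E n k l c = mat n n (\<lambda>(a,b). (if a = b then 1 else 0) + (if a = k \<and> b = l then c else 0))"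

lemma E_carrier[simp]: "E n k l c \<in> carrier_mat n n" by (simp add: E_def)
lemma E_dims[simp]: "dim_row (E n k l c) = n" "dim_col (E n k l c) = n" by (simp_all add: E_def)

lemma E_vec:
  assumes "v \<in> carrier_vec n" "a < n" "k < n" "l < n"
  shows "(E n k l c *\<^sub>v v) $ a = v $ a + (if a = k then c * v $ l else 0)"
proof -
  have "(E n k l c *\<^sub>v v) $ a = (\<Sum>t\<in>{0..<n}. (if t = a then v $ t else 0) + (if t = l then (if a = k then c * v $ t else 0) else 0))"
    using assms by (auto simp: E_def scalar_prod_def distrib_right intro!: sum.cong)
  also have "\<dots> = v $ a + (if a = k then c * v $ l else 0)"
    using assms by (simp add: sum.distrib)
  finally show ?thesis .
qed

lemma mat_eq_by_vec:
  assumes "M \<in> carrier_mat n n" "N \<in> carrier_mat n n" "\<And>v. v \<in> carrier_vec n \<Longrightarrow> M *\<^sub>v v = N *\<^sub>v v"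
  shows "M = (N :: int mat)"
proof (rule eq_matI)
  fix a b assume ab: "a < dim_row N" "b < dim_col N"
  have u: "(X *\<^sub>v unit_vec n b) $ a = X $$ (a,b)" if "X \<in> carrier_mat n n" for X :: "int mat"
  proof -
    have "(X *\<^sub>v unit_vec n b) $ a = (\<Sum>t\<in>{0..<n}. X $$ (a,t) * (if t = b then 1 else 0))"
      using that ab assms by (auto simp: scalar_prod_def intro!: sum.cong)
    also have "\<dots> = (\<Sum>t\<in>{0..<n}. if t = b then X $$ (a,t) else 0)"
      by (rule sum.cong) auto
    finally have "(X *\<^sub>v unit_vec n b) $ a = (\<Sum>t\<in>{0..<n}. if t = b then X $$ (a,t) else 0)" .
    then show ?thesis using ab assms by simp
  qed
  show "M $$ (a,b) = N $$ (a,b)" using u[OF assms(1)] u[OF assms(2)] assms(3)[of "unit_vec n b"] by simp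
qed (use assms in auto)

lemma E_GLZ:
  assumes "k < n" "l < n" "k \<noteq> l"
  shows "E n k l c \<in> GLZ n"
proof -
  have inv: "E n k l c * E n k l (-c) = 1\<^sub>m n" for c
  proof (rule mat_eq_by_vec[of _ n])
    fix v :: "int vec" assume v: "v \<in> carrier_vec n"
    have "(E n k l c * E n k l (-c)) *\<^sub>v v = E n k l c *\<^sub>v (E n k l (-c) *\<^sub>v v)"
      using assoc_mult_mat_vec[of "E n k l c" n n "E n k l (-c)" n v] v by simp
    also have "\<dots> = v"
    proof (rule eq_vecI)
      fix a assume a: "a < dim_vec v"
      have w: "E n k l (-c) *\<^sub>v v \<in> carrier_vec n" by (rule mult_mat_vec_carrier[OF E_carrier v])
      show "(E n k l c *\<^sub>v (E n k l (-c) *\<^sub>v v)) $ a = v $ a"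
        using E_vec[OF w, of a k l c] E_vec[OF v, of a k l "-c"] E_vec[OF v, of l k l "-c"] a v assms by auto
    qed (use v in simp)
    finally show "(E n k l c * E n k l (-c)) *\<^sub>v v = 1\<^sub>m n *\<^sub>v v" using v by simp
  qed auto
  show ?thesis using GLZ_I[OF _ _ inv[of c] inv[of "-c", simplified]] by simp
qed

definition msr :: "nat \<Rightarrow> int vec \<Rightarrow> nat" where
  "msr n v = (\<Sum>t<n. nat \<bar>v $ t\<bar>)"

lemma abs_step:
  fixes a b :: int
  assumes "a \<noteq> 0" "b \<noteq> 0" "\<bar>b\<bar> \<le> \<bar>a\<bar>"
  shows "\<bar>a - sgn a * sgn b * b\<bar> < \<bar>a\<bar>"
  using assms by (cases "a > 0"; cases "b > 0") (auto simp: sgn_if)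

lemma reduce:
  assumes "n \<ge> 1"
  shows "v \<in> carrier_vec n \<Longrightarrow> \<exists>W\<in>GLZ n. \<exists>d. W *\<^sub>v v = d \<cdot>\<^sub>v unit_vec n (n-1)"
proof (induction "msr n v" arbitrary: v rule: less_induct)
  case less
  note vc = less.prems
  show ?case
  proof (cases "\<exists>k l. k<n \<and> l<n \<and> k\<noteq>l \<and> v$k \<noteq> 0 \<and> v$l \<noteq> 0")
    case True
    then obtain k0 l0 where kl0: "k0<n" "l0<n" "k0\<noteq>l0" "v$k0 \<noteq> 0" "v$l0 \<noteq> 0" by blast
    obtain k l where kl: "k<n" "l<n" "k\<noteq>l" "v$k \<noteq> 0" "v$l \<noteq> 0" "\<bar>v$l\<bar> \<le> \<bar>v$k\<bar>"
    proof (cases "\<bar>v$l0\<bar> \<le> \<bar>v$k0\<bar>")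
      case True then show ?thesis using kl0 that by blast
    next
      case False then show ?thesis using kl0 that[of l0 k0] by auto
    qed
    define s where "s = sgn (v$k) * sgn (v$l)"
    define w where "w = E n k l (-s) *\<^sub>v v"
    have wc: "w \<in> carrier_vec n" unfolding w_def by (rule mult_mat_vec_carrier[OF E_carrier vc])
    have wt: "w $ t = (if t = k then v$k - s * v$l else v$t)" if "t < n" for t
      unfolding w_def using E_vec[OF vc that kl(1,2), of "-s"] by auto
    have lt: "\<bar>v$k - s * v$l\<bar> < \<bar>v$k\<bar>" unfolding s_def using abs_step[OF kl(4,5,6)] by simp
    have "msr n w < msr n v" unfolding msr_def
    proof (rule sum_strict_mono_ex1)
      show "\<forall>t\<in>{..<n}. nat \<bar>w $ t\<bar> \<le> nat \<bar>v $ t\<bar>" using wt lt by auto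
      show "\<exists>t\<in>{..<n}. nat \<bar>w $ t\<bar> < nat \<bar>v $ t\<bar>" using wt lt kl by (intro bexI[of _ k]) auto
    qed simp
    then obtain W d where W: "W \<in> GLZ n" "W *\<^sub>v w = d \<cdot>\<^sub>v unit_vec n (n-1)" using less.hyps wc by blast
    have G: "W * E n k l (-s) \<in> GLZ n" using GLZ_mult[OF W(1) E_GLZ[OF kl(1-3)]] .
    have "(W * E n k l (-s)) *\<^sub>v v = W *\<^sub>v w" unfolding w_def
      using assoc_mult_mat_vec[OF GLZ_carrier[OF W(1)] E_carrier vc] .
    then show ?thesis using G W by metis
  next
    case False
    show ?thesis
    proof (cases "\<forall>t<n. v$t = 0")
      case True
      have "1\<^sub>m n *\<^sub>v v = 0 \<cdot>\<^sub>v unit_vec n (n-1)"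
        by (rule eq_vecI) (use vc True in auto)
      then show ?thesis using one_GLZ by blast
    next
      case False2: False
      then obtain k where k: "k < n" "v$k \<noteq> 0" by auto
      have z: "v$t = 0" if "t < n" "t \<noteq> k" for t using False k that by blast
      show ?thesis
      proof (cases "k = n - 1")
        case True
        have "1\<^sub>m n *\<^sub>v v = v$k \<cdot>\<^sub>v unit_vec n (n-1)"
          by (rule eq_vecI) (use vc True z k in auto)
        then show ?thesis using one_GLZ by blast
      next
        case False3: False
        have n1: "n - 1 < n" using assms by simp
        define w where "w = E n (n-1) k 1 *\<^sub>v v"
        have wc: "w \<in> carrier_vec n" unfolding w_def by (rule mult_mat_vec_carrier[OF E_carrier vc])
        have wt: "w $ t = (if t = n - 1 then v$k else v$t)" if "t < n" for t
          unfolding w_def using E_vec[OF vc that n1 k(1), of 1] z[OF n1] False3 by auto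
        define u where "u = E n k (n-1) (-1) *\<^sub>v w"
        have ut: "u $ t = (if t = n - 1 then v$k else 0)" if "t < n" for t
          unfolding u_def using E_vec[OF wc that k(1) n1, of "-1"] wt[OF that] wt[OF n1] wt[OF k(1)] z[OF that] False3 by auto
        have uc: "u \<in> carrier_vec n" unfolding u_def by (rule mult_mat_vec_carrier[OF E_carrier wc])
        have ue: "u = v$k \<cdot>\<^sub>v unit_vec n (n-1)"
          by (rule eq_vecI) (use uc ut n1 in auto)
        have G: "E n k (n-1) (-1) * E n (n-1) k 1 \<in> GLZ n"
          using GLZ_mult[OF E_GLZ[OF k(1) n1] E_GLZ[OF n1 k(1)]] False3 by auto
        have "(E n k (n-1) (-1) * E n (n-1) k 1) *\<^sub>v v = u" unfolding u_def w_def
          using assoc_mult_mat_vec[OF E_carrier E_carrier vc] .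
        then show ?thesis using G ue by metis
      qed
    qed
  qed
qed

lemma nt1: fixes q d x :: int assumes "prime q" "\<not> q dvd d"
  shows "q^2 dvd d*x \<longleftrightarrow> q^2 dvd x"
proof -
  have "coprime (q^2) d" using assms by (simp add: prime_imp_coprime)
  then show ?thesis by (rule coprime_dvd_mult_right_iff)
qed
lemma nt2: fixes q d x :: int assumes "prime q" "\<not> q dvd d"
  shows "q dvd d*x \<longleftrightarrow> q dvd x"
  using assms by (simp add: prime_dvd_mult_iff)
lemma nt3: fixes q d x :: int assumes "prime q" "q dvd d" "\<not> q^2 dvd d"
  shows "q^2 dvd d*x \<longleftrightarrow> q dvd x"
proof -
  obtain e where e: "d = q * e" using assms by blast
  have "\<not> q dvd e" using assms e by (auto simp: power2_eq_square)
  have "q^2 dvd d*x \<longleftrightarrow> q dvd e * x" using e assms(1) by (auto simp: power2_eq_square mult.assoc prime_gt_0_int)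
  also have "\<dots> \<longleftrightarrow> q dvd x" using \<open>\<not> q dvd e\<close> assms(1) by (simp add: prime_dvd_mult_iff)
  finally show ?thesis .
qed

lemma P_iff_inv:
  assumes "A \<in> carrier_mat n n" "Ai \<in> carrier_mat n n" "A * Ai = 1\<^sub>m n" "Ai * A = 1\<^sub>m n" "mu \<in> carrier_vec n"
  shows "P n p i j mu A \<longleftrightarrow> transpose_mat Ai *\<^sub>v mu \<in> L0 n p i j"
proof
  have TT: "transpose_mat Ai * transpose_mat A = 1\<^sub>m n" using transpose_mult[OF assms(1,2)] assms(3) by simp
  assume "P n p i j mu A"
  then obtain v where v: "v \<in> L0 n p i j" "mu = transpose_mat A *\<^sub>v v" by (auto simp: P_def)
  have "transpose_mat Ai *\<^sub>v mu = (transpose_mat Ai * transpose_mat A) *\<^sub>v v"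
    using v assoc_mult_mat_vec[of "transpose_mat Ai" n n "transpose_mat A" n v] assms L0_carrier[OF v(1)] by simp
  then show "transpose_mat Ai *\<^sub>v mu \<in> L0 n p i j" using TT v L0_carrier[OF v(1)] by simp
next
  have TT: "transpose_mat A * transpose_mat Ai = 1\<^sub>m n" using transpose_mult[OF assms(2,1)] assms(4) by simp
  assume a: "transpose_mat Ai *\<^sub>v mu \<in> L0 n p i j"
  have "transpose_mat A *\<^sub>v (transpose_mat Ai *\<^sub>v mu) = (transpose_mat A * transpose_mat Ai) *\<^sub>v mu"
    using assoc_mult_mat_vec[of "transpose_mat A" n n "transpose_mat Ai" n mu] assms by simp
  then have "mu = transpose_mat A *\<^sub>v (transpose_mat Ai *\<^sub>v mu)" using TT assms by simp
  then show "P n p i j mu A" unfolding P_def using a by blast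
qed

lemma inv_de:
  fixes d :: int and Ai :: "int mat"
  assumes "Ai \<in> carrier_mat n n" "k < n" "n \<ge> 1"
  shows "(transpose_mat Ai *\<^sub>v (d \<cdot>\<^sub>v unit_vec n (n-1))) $ k = d * Ai $$ (n-1, k)"
proof -
  have "(transpose_mat Ai *\<^sub>v (d \<cdot>\<^sub>v unit_vec n (n-1))) $ k
      = (\<Sum>t\<in>{0..<n}. Ai $$ (t,k) * (d * (if t = n-1 then 1 else 0)))"
    using assms by (auto simp: scalar_prod_def intro!: sum.cong)
  also have "\<dots> = (\<Sum>t\<in>{0..<n}. if t = n-1 then d * Ai $$ (t,k) else 0)"
    by (rule sum.cong) auto
  finally show ?thesis using assms by (simp add: mult.commute)
qed

lemma P_de_iff:
  assumes "A \<in> carrier_mat n n" "Ai \<in> carrier_mat n n" "A * Ai = 1\<^sub>m n" "Ai * A = 1\<^sub>m n" "n \<ge> 1"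
    "i \<le> j" "j \<le> n"
  shows "P n p i j (d \<cdot>\<^sub>v unit_vec n (n-1)) A \<longleftrightarrow>
     (\<forall>k < i. int p ^ 2 dvd d * Ai $$ (n - 1, k)) \<and> (\<forall>k. i \<le> k \<and> k < j \<longrightarrow> int p dvd d * Ai $$ (n - 1, k))"
proof -
  have mc: "d \<cdot>\<^sub>v unit_vec n (n-1) \<in> carrier_vec n" by simp
  have c: "transpose_mat Ai *\<^sub>v (d \<cdot>\<^sub>v unit_vec n (n-1)) \<in> carrier_vec n"
    using assms(2) by simp
  show ?thesis unfolding P_iff_inv[OF assms(1-4) mc] L0_def
    using inv_de[OF assms(2) _ assms(5), of _ d] c assms(6,7) by auto
qed

lemma S2_iff:
  assumes "A \<in> GLZ n" "Ai \<in> carrier_mat n n" "A * Ai = 1\<^sub>m n" "Ai * A = 1\<^sub>m n"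
  shows "A \<in> S2 n p i j \<longleftrightarrow> (\<forall>k < i. int p ^ 2 dvd Ai $$ (n - 1, k)) \<and>
      (\<forall>k. i \<le> k \<and> k < j \<longrightarrow> int p dvd Ai $$ (n - 1, k))"
proof -
  have u: "B \<in> carrier_mat n n \<Longrightarrow> B * A = 1\<^sub>m n \<Longrightarrow> B = Ai" for B
    using inv_unique[of A n Ai B] GLZ_carrier[OF assms(1)] assms by blast
  show ?thesis unfolding S2_def using assms u by blast
qed

lemma S1_iff:
  assumes "A \<in> GLZ n" "Ai \<in> carrier_mat n n" "A * Ai = 1\<^sub>m n" "Ai * A = 1\<^sub>m n"
  shows "A \<in> S1 n p i \<longleftrightarrow> (\<forall>k < i. int p dvd Ai $$ (n - 1, k))"
proof -
  have u: "B \<in> carrier_mat n n \<Longrightarrow> B * A = 1\<^sub>m n \<Longrightarrow> B = Ai" for B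
    using inv_unique[of A n Ai B] GLZ_carrier[OF assms(1)] assms by blast
  show ?thesis unfolding S1_def using assms u by blast
qed

lemma set_case:
  assumes "prime p" "n \<ge> 1" "i \<le> j" "j \<le> n"
  shows "\<not> int p dvd d \<Longrightarrow> {A \<in> GLZ n. P n p i j (d \<cdot>\<^sub>v unit_vec n (n-1)) A} = S2 n p i j"
    and "int p dvd d \<Longrightarrow> \<not> int p ^ 2 dvd d \<Longrightarrow> {A \<in> GLZ n. P n p i j (d \<cdot>\<^sub>v unit_vec n (n-1)) A} = S1 n p i"
    and "int p ^ 2 dvd d \<Longrightarrow> {A \<in> GLZ n. P n p i j (d \<cdot>\<^sub>v unit_vec n (n-1)) A} = GLZ n"
proof -
  have pr: "prime (int p)" using assms(1) by simp
  have S2sub: "S2 n p i j \<subseteq> GLZ n" by (auto simp: S2_def)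
  have S1sub: "S1 n p i \<subseteq> GLZ n" by (auto simp: S1_def)
  {
    fix A assume A: "A \<in> GLZ n"
    obtain Ai where Ai: "Ai \<in> carrier_mat n n" "A * Ai = 1\<^sub>m n" "Ai * A = 1\<^sub>m n" using GLZ_inv[OF A] by auto
    note pe = P_de_iff[OF GLZ_carrier[OF A] Ai assms(2-4), of p d]
    note s2 = S2_iff[OF A Ai, of p i j]
    note s1 = S1_iff[OF A Ai, of p i]
    have "\<not> int p dvd d \<Longrightarrow> P n p i j (d \<cdot>\<^sub>v unit_vec n (n-1)) A \<longleftrightarrow> A \<in> S2 n p i j"
      unfolding pe s2 using nt1[OF pr] nt2[OF pr] by simp
    moreover have "int p dvd d \<Longrightarrow> \<not> int p ^ 2 dvd d \<Longrightarrow> P n p i j (d \<cdot>\<^sub>v unit_vec n (n-1)) A \<longleftrightarrow> A \<in> S1 n p i"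
      unfolding pe s1 using nt3[OF pr] by simp
    moreover have "int p ^ 2 dvd d \<Longrightarrow> P n p i j (d \<cdot>\<^sub>v unit_vec n (n-1)) A"
    proof -
      assume d2: "int p ^ 2 dvd d"
      have "int p dvd d" using d2 by (meson dvd_power dvd_trans pos2)
      then show ?thesis unfolding pe using d2 by simp
    qed
    ultimately have "(\<not> int p dvd d \<longrightarrow> (P n p i j (d \<cdot>\<^sub>v unit_vec n (n-1)) A \<longleftrightarrow> A \<in> S2 n p i j)) \<and>
       (int p dvd d \<longrightarrow> \<not> int p ^ 2 dvd d \<longrightarrow> (P n p i j (d \<cdot>\<^sub>v unit_vec n (n-1)) A \<longleftrightarrow> A \<in> S1 n p i)) \<and>
       (int p ^ 2 dvd d \<longrightarrow> P n p i j (d \<cdot>\<^sub>v unit_vec n (n-1)) A)" by blast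
  } note k = this
  show "\<not> int p dvd d \<Longrightarrow> {A \<in> GLZ n. P n p i j (d \<cdot>\<^sub>v unit_vec n (n-1)) A} = S2 n p i j"
    using k S2sub by blast
  show "int p dvd d \<Longrightarrow> \<not> int p ^ 2 dvd d \<Longrightarrow> {A \<in> GLZ n. P n p i j (d \<cdot>\<^sub>v unit_vec n (n-1)) A} = S1 n p i"
    using k S1sub by blast
  show "int p ^ 2 dvd d \<Longrightarrow> {A \<in> GLZ n. P n p i j (d \<cdot>\<^sub>v unit_vec n (n-1)) A} = GLZ n"
    using k by blast
qed

lemma dvd_mult_diff_left:
  assumes "X \<in> carrier_mat n n" "Y \<in> carrier_mat n n" "B \<in> carrier_mat n n" "k < n" "l < n"
    "\<And>t. t < n \<Longrightarrow> m dvd X $$ (k,t) - Y $$ (k,t)"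
  shows "(m::int) dvd (X * B) $$ (k,l) - (Y * B) $$ (k,l)"
proof -
  have "(X * B) $$ (k,l) - (Y * B) $$ (k,l) = (\<Sum>t\<in>{0..<n}. (X $$ (k,t) - Y $$ (k,t)) * B $$ (t,l))"
    using assms by (simp add: scalar_prod_def sum_subtractf left_diff_distrib)
  also have "m dvd \<dots>" using assms by (auto intro!: dvd_sum)
  finally show ?thesis .
qed

lemma dvd_mult_diff_right:
  assumes "X \<in> carrier_mat n n" "Y \<in> carrier_mat n n" "A \<in> carrier_mat n n" "k < n" "l < n"
    "\<And>t. t < n \<Longrightarrow> m dvd X $$ (t,l) - Y $$ (t,l)"
  shows "(m::int) dvd (A * X) $$ (k,l) - (A * Y) $$ (k,l)"
proof -
  have "(A * X) $$ (k,l) - (A * Y) $$ (k,l) = (\<Sum>t\<in>{0..<n}. A $$ (k,t) * (X $$ (t,l) - Y $$ (t,l)))"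
    using assms by (simp add: scalar_prod_def sum_subtractf right_diff_distrib)
  also have "m dvd \<dots>" using assms by (auto intro!: dvd_sum)
  finally show ?thesis .
qed

definition congI :: "nat \<Rightarrow> int \<Rightarrow> int mat \<Rightarrow> bool" where
  "congI n m h \<longleftrightarrow> (\<forall>k l. k < n \<longrightarrow> l < n \<longrightarrow> m dvd h $$ (k,l) - 1\<^sub>m n $$ (k,l))"

lemma congI_inv:
  assumes "h \<in> carrier_mat n n" "hi \<in> carrier_mat n n" "hi * h = 1\<^sub>m n" "congI n m h"
  shows "congI n m hi"
  unfolding congI_def
proof (intro allI impI)
  fix k l assume kl: "k < n" "l < n"
  have "m dvd (hi * h) $$ (k,l) - (hi * 1\<^sub>m n) $$ (k,l)"
    by (rule dvd_mult_diff_right[of _ n]) (use assms kl in \<open>auto simp: congI_def\<close>)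
  then have "m dvd 1\<^sub>m n $$ (k,l) - hi $$ (k,l)" using assms kl by simp
  then show "m dvd hi $$ (k,l) - 1\<^sub>m n $$ (k,l)" by (metis dvd_diff_commute)
qed

lemma congI_H:
  assumes "p > 0" "h \<in> GLZ n" "congI n (int p ^ 2) h"
  shows "h \<in> Hgrp n p i j"
proof -
  let ?f = "dd p i j"
  have hc: "h \<in> carrier_mat n n" using assms GLZ_carrier by blast
  obtain hi where hi: "hi \<in> carrier_mat n n" "h * hi = 1\<^sub>m n" "hi * h = 1\<^sub>m n" using GLZ_inv[OF assms(2)] by auto
  have chi: "congI n (int p ^ 2) hi" using congI_inv[OF hc hi(1,3) assms(3)] .
  define gof where "gof X = mat n n (\<lambda>(k,l). X $$ (k,l) * ?f l div ?f k)" for X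
  have conj: "X * dg n ?f = dg n ?f * gof X" if X: "X \<in> carrier_mat n n" "congI n (int p ^ 2) X" for X
  proof (rule eq_matI)
    fix k l assume kl: "k < dim_row (dg n ?f * gof X)" "l < dim_col (dg n ?f * gof X)"
    have kl': "k < n" "l < n" using kl by (auto simp: gof_def dg_def)
    have dv: "?f k dvd X $$ (k,l) * ?f l"
    proof (cases "k = l")
      case False
      have "int p ^ 2 dvd X $$ (k,l) - (if k = l then 1 else 0)" using X(2) kl' by (auto simp: congI_def)
      then have "int p ^ 2 dvd X $$ (k,l)" using False by simp
      then show ?thesis using dd_dvd[of p i j k] by (meson dvd_mult2 dvd_trans)
    qed simp
    show "(X * dg n ?f) $$ (k,l) = (dg n ?f * gof X) $$ (k,l)"
      using dg_mult_right[OF X(1) kl'] dg_mult_left[of "gof X" n n k l ?f] kl' dv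
      by (simp add: gof_def)
  qed (use X in \<open>auto simp: gof_def dg_def\<close>)
  have gc: "gof X \<in> carrier_mat n n" for X by (simp add: gof_def)
  have d: "dg n ?f \<in> carrier_mat n n" by simp
  have nz: "\<And>k. k < n \<Longrightarrow> ?f k \<noteq> 0" using dd_nz assms(1) by blast
  have e1: "h * dg n ?f = dg n ?f * gof h" using conj[OF hc assms(3)] .
  have e2: "hi * dg n ?f = dg n ?f * gof hi" using conj[OF hi(1) chi] .
  have "dg n ?f * (gof h * gof hi) = h * hi * dg n ?f"
    using e1 e2 assoc_nn[OF d gc gc] assoc_nn[OF hc d gc] assoc_nn[OF hc hi(1) d] by simp
  then have i1: "gof h * gof hi = 1\<^sub>m n"
    using dg_cancel[of "gof h * gof hi" n n "1\<^sub>m n" ?f] hi(2) nz d mult_carrier_mat[OF gc gc] by simp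
  have "dg n ?f * (gof hi * gof h) = hi * h * dg n ?f"
    using e1 e2 assoc_nn[OF d gc gc] assoc_nn[OF hi(1) d gc] assoc_nn[OF hi(1) hc d] by simp
  then have i2: "gof hi * gof h = 1\<^sub>m n"
    using dg_cancel[of "gof hi * gof h" n n "1\<^sub>m n" ?f] hi(3) nz d mult_carrier_mat[OF gc gc] by simp
  have "gof h \<in> GLZ n" using GLZ_I[OF gc gc i1 i2] .
  then show ?thesis unfolding Hgrp_def delta_dg using assms(2) e1 by auto
qed

lemma finite_cosets:
  assumes "p > 0"
  shows "finite (cosets (Hgrp n p i j) (GLZ n))"
proof -
  let ?T = "cosets (Hgrp n p i j) (GLZ n)"
  let ?m = "int p ^ 2"
  define key where "key C = (\<lambda>kl \<in> {..<n} \<times> {..<n}. rep C $$ kl mod ?m)" for C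
  have sub: "GLZ n \<subseteq> carrier_mat n n" using GLZ_carrier by blast
  have repG: "rep C \<in> GLZ n" if C: "C \<in> ?T" for C
  proof -
    obtain A where "A \<in> GLZ n" "C = rcos (Hgrp n p i j) A" using C unfolding cosets_def by blast
    then show ?thesis using rep_mem(1)[OF sub C] rcos_GLZ by blast
  qed
  have inj: "inj_on key ?T"
  proof (rule inj_onI)
    fix C D assume C: "C \<in> ?T" and D: "D \<in> ?T" and k: "key C = key D"
    let ?A = "rep C" and ?B = "rep D"
    have A: "?A \<in> GLZ n" and B: "?B \<in> GLZ n" using repG C D by auto
    have Ac: "?A \<in> carrier_mat n n" and Bc: "?B \<in> carrier_mat n n" using A B GLZ_carrier by auto
    obtain Ai where Ai: "Ai \<in> carrier_mat n n" "?A * Ai = 1\<^sub>m n" "Ai * ?A = 1\<^sub>m n" using GLZ_inv[OF A] by auto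
    have cong: "?m dvd ?B $$ (k,l) - ?A $$ (k,l)" if "k < n" "l < n" for k l
    proof -
      have "key C (k,l) = key D (k,l)" using k by simp
      then have "?A $$ (k,l) mod ?m = ?B $$ (k,l) mod ?m" using that by (simp add: key_def)
      then show ?thesis by (metis mod_eq_dvd_iff)
    qed
    let ?h = "?B * Ai"
    have hG: "?h \<in> GLZ n" using GLZ_mult[OF B GLZ_inv_in[OF Ac Ai]] .
    have "congI n ?m ?h" unfolding congI_def
    proof (intro allI impI)
      fix k l assume kl: "k < n" "l < n"
      have "?m dvd (?B * Ai) $$ (k,l) - (?A * Ai) $$ (k,l)"
        by (rule dvd_mult_diff_left[of _ n]) (use Ac Bc Ai kl cong in auto)
      then show "?m dvd ?h $$ (k,l) - 1\<^sub>m n $$ (k,l)" using Ai by simp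
    qed
    then have hH: "?h \<in> Hgrp n p i j" using congI_H[OF assms hG] by blast
    have "?h * ?A = ?B * (Ai * ?A)" using assoc_nn[OF Bc Ai(1) Ac] .
    then have "?B = ?h * ?A" using Ai Bc by simp
    then have "?B \<in> rcos (Hgrp n p i j) ?A" unfolding rcos_def using hH by blast
    then have "rcos (Hgrp n p i j) ?B = rcos (Hgrp n p i j) ?A" using rcos_eq[OF Ac] by blast
    then show "C = D" using rep_mem(2)[OF sub C] rep_mem(2)[OF sub D] by simp
  qed
  have "key C \<in> PiE ({..<n} \<times> {..<n}) (\<lambda>_. {0..<?m})" for C
    unfolding key_def by (rule restrict_PiE_iff[THEN iffD2]) (use assms in auto)
  then have "key ` ?T \<subseteq> PiE ({..<n} \<times> {..<n}) (\<lambda>_. {0..<?m})" by blast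
  moreover have "finite (PiE ({..<n} \<times> {..<n}) (\<lambda>_. {0..<?m}))" by (rule finite_PiE) auto
  ultimately have "finite (key ` ?T)" by (rule finite_subset)
  then show ?thesis using finite_imageD[OF _ inj] by blast
qed



lemma infsum_finite_sum:
  fixes f :: "'i \<Rightarrow> 'a \<Rightarrow> 'b::{topological_comm_monoid_add, t2_space}"
  assumes "finite I" "\<And>i. i \<in> I \<Longrightarrow> f i summable_on A"
  shows "(\<lambda>x. \<Sum>i\<in>I. f i x) summable_on A \<and> infsum (\<lambda>x. \<Sum>i\<in>I. f i x) A = (\<Sum>i\<in>I. infsum (f i) A)"
  using assms
proof (induction I rule: finite_induct)
  case empty then show ?case by simp
next
  case (insert a F)
  then have s: "f a summable_on A" "(\<lambda>x. \<Sum>i\<in>F. f i x) summable_on A"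
    and e: "infsum (\<lambda>x. \<Sum>i\<in>F. f i x) A = (\<Sum>i\<in>F. infsum (f i) A)" by auto
  show ?case using insert(1,2) summable_on_add[OF s] infsum_add[OF s] e by simp
qed

lemma count_mu:
  assumes "prime p" "n \<ge> 1" "i \<le> j" "j \<le> n" "mu \<in> carrier_vec n"
  shows "card {C \<in> cosets (Hgrp n p i j) (GLZ n). P n p i j mu (rep C)} =
    (if (\<forall>k<n. int p ^ 2 dvd mu $ k) then card (cosets (Hgrp n p i j) (GLZ n))
     else if (\<forall>k<n. int p dvd mu $ k) then card (cosets (Hgrp n p i j) (S1 n p i))
     else card (cosets (Hgrp n p i j) (S2 n p i j)))"
proof -
  have p0: "p > 0" using assms(1) prime_gt_0_nat by blast
  have e1: "{C \<in> cosets (Hgrp n p i j) (GLZ n). P n p i j mu (rep C)} = cosets (Hgrp n p i j) {A \<in> GLZ n. P n p i j mu A}"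
    by (rule cosets_Q) (use P_H[OF p0 assms(3,4)] GLZ_carrier in blast)
  obtain W d where W: "W \<in> GLZ n" "W *\<^sub>v mu = d \<cdot>\<^sub>v unit_vec n (n-1)" using reduce[OF assms(2,5)] by blast
  have e2: "card (cosets (Hgrp n p i j) {A \<in> GLZ n. P n p i j mu A}) = card (cosets (Hgrp n p i j) {A \<in> GLZ n. P n p i j (d \<cdot>\<^sub>v unit_vec n (n-1)) A})"
    using count_W[OF W(1) assms(5), of p i j] W(2) by simp
  have Wc: "W \<in> carrier_mat n n" using W GLZ_carrier by blast
  obtain Wi where Wi: "Wi \<in> carrier_mat n n" "W * Wi = 1\<^sub>m n" "Wi * W = 1\<^sub>m n" using GLZ_inv[OF W(1)] by auto
  have n1: "n - 1 < n" using assms(2) by simp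
  have dvdiff: "(\<forall>k<n. m dvd mu $ k) \<longleftrightarrow> m dvd d" for m :: int
  proof
    assume a: "\<forall>k<n. m dvd mu $ k"
    have "m dvd (W *\<^sub>v mu) $ (n-1)" by (rule dvd_mult_vec[OF Wc assms(5)]) (use a n1 in auto)
    then show "m dvd d" using W(2) n1 by simp
  next
    assume a: "m dvd d"
    have "mu = Wi *\<^sub>v (W *\<^sub>v mu)" using assoc_mult_mat_vec[OF Wi(1) Wc assms(5)] Wi(3) assms(5) by simp
    also have "\<dots> = Wi *\<^sub>v (d \<cdot>\<^sub>v unit_vec n (n-1))" using W(2) by simp
    finally have mu: "mu = Wi *\<^sub>v (d \<cdot>\<^sub>v unit_vec n (n-1))" .
    show "\<forall>k<n. m dvd mu $ k"
    proof (intro allI impI)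
      fix k assume "k < n"
      show "m dvd mu $ k" unfolding mu by (rule dvd_mult_vec[OF Wi(1)]) (use a \<open>k < n\<close> in auto)
    qed
  qed
  show ?thesis
    unfolding e1 e2 dvdiff
    using set_case[OF assms(1-4), of d] by auto
qed

theorem lemma3p7:
  fixes n p i j :: nat and B :: "int vec \<Rightarrow> complex"
  assumes "n \<ge> 1" and "prime p" and "i \<le> j" and "j \<le> n"
    and "\<forall>C \<in> cosets (Hgrp n p i j) (GLZ n).
           (\<lambda>v. B (transpose_mat (rep C) *\<^sub>v v)) abs_summable_on (L0 n p i j)"
  shows "\<exists>a0 a1 a2 :: int.
     a0 + a1 + a2 = int (card (cosets (Hgrp n p i j) (GLZ n))) \<and>
     a0 + a1 = int (card (cosets (Hgrp n p i j) (S1 n p i))) \<and>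
     a0 = int (card (cosets (Hgrp n p i j) (S2 n p i j))) \<and>
     (\<Sum>C \<in> cosets (Hgrp n p i j) (GLZ n).
        \<Sum>\<^sub>\<infinity>v \<in> L0 n p i j. B (transpose_mat (rep C) *\<^sub>v v))
     = of_int a0 * (\<Sum>\<^sub>\<infinity>v \<in> carrier_vec n. B v)
     + of_int a1 * (\<Sum>\<^sub>\<infinity>v \<in> carrier_vec n. B (int p \<cdot>\<^sub>v v))
     + of_int a2 * (\<Sum>\<^sub>\<infinity>v \<in> carrier_vec n. B (int p ^ 2 \<cdot>\<^sub>v v))"
proof -
  have p0: "p > 0" using assms(2) prime_gt_0_nat by blast
  define H where "H = Hgrp n p i j"
  define T where "T = cosets H (GLZ n)"
  define L where "L = L0 n p i j"
  define V where "V = (carrier_vec n :: int vec set)"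
  define c where "c = card T"
  define c1 where "c1 = card (cosets H (S1 n p i))"
  define c2 where "c2 = card (cosets H (S2 n p i j))"
  have fT: "finite T" unfolding T_def H_def using finite_cosets[OF p0] .
  have S2S1: "S2 n p i j \<subseteq> S1 n p i"
  proof
    fix A assume "A \<in> S2 n p i j"
    then show "A \<in> S1 n p i" unfolding S2_def S1_def
      by (auto simp: power2_eq_square) (meson dvd_mult_left)
  qed
  have S1G: "S1 n p i \<subseteq> GLZ n" by (auto simp: S1_def)
  have c21: "c2 \<le> c1" unfolding c2_def c1_def
    by (rule card_mono) (use fT S1G S2S1 in \<open>auto simp: T_def cosets_def intro: finite_subset\<close>)
  have c1c: "c1 \<le> c" unfolding c_def c1_def
    by (rule card_mono) (use fT S1G in \<open>auto simp: T_def cosets_def\<close>)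
  define a0 where "a0 = int c2"
  define a1 where "a1 = int c1 - int c2"
  define a2 where "a2 = int c - int c1"
  define D1 where "D1 mu \<longleftrightarrow> (\<forall>k<n. int p dvd mu $ k)" for mu :: "int vec"
  define D2 where "D2 mu \<longleftrightarrow> (\<forall>k<n. int p ^ 2 dvd mu $ k)" for mu :: "int vec"
  have D21: "D2 mu \<Longrightarrow> D1 mu" for mu unfolding D1_def D2_def
    by (auto simp: power2_eq_square) (meson dvd_mult_left)
  define N where "N mu = card {C \<in> T. P n p i j mu (rep C)}" for mu
  have Nf: "N mu = (if D2 mu then c else if D1 mu then c1 else c2)" if "mu \<in> V" for mu
    unfolding N_def D1_def D2_def c_def c1_def c2_def T_def H_def
    using count_mu[OF assms(2,1,3,4)] that V_def by simp
  have Nint: "int (N mu) = a0 + a1 * (if D1 mu then 1 else 0) + a2 * (if D2 mu then 1 else 0)" if "mu \<in> V" for mu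
    using Nf[OF that] D21[of mu] unfolding a0_def a1_def a2_def by auto
  have a_nonneg: "a0 \<ge> 0" "a1 \<ge> 0" "a2 \<ge> 0" unfolding a0_def a1_def a2_def using c21 c1c by auto
  have Nge: "a0 \<le> int (N mu)" "a1 * (if D1 mu then 1 else 0) \<le> int (N mu)" "a2 * (if D2 mu then 1 else 0) \<le> int (N mu)"
    if "mu \<in> V" for mu
    using Nint[OF that] a_nonneg by (auto split: if_splits)

  define f where "f C mu = (if P n p i j mu (rep C) then B mu else 0)" for C mu
  have sub: "GLZ n \<subseteq> carrier_mat n n" using GLZ_carrier by blast
  have repG: "rep C \<in> GLZ n" if C: "C \<in> T" for C
  proof -
    obtain A where "A \<in> GLZ n" "C = rcos H A" using C unfolding T_def cosets_def by blast
    then show ?thesis using rep_mem(1)[OF sub C[unfolded T_def H_def]] rcos_GLZ unfolding H_def by blast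
  qed
  have inj: "inj_on (\<lambda>v. transpose_mat (rep C) *\<^sub>v v) L" if C: "C \<in> T" for C
  proof (rule inj_onI)
    fix x y assume xy: "x \<in> L" "y \<in> L" "transpose_mat (rep C) *\<^sub>v x = transpose_mat (rep C) *\<^sub>v y"
    have R: "transpose_mat (rep C) \<in> GLZ n" using GLZ_transpose[OF repG[OF C]] .
    obtain Ri where Ri: "Ri \<in> carrier_mat n n" "transpose_mat (rep C) * Ri = 1\<^sub>m n" "Ri * transpose_mat (rep C) = 1\<^sub>m n"
      using GLZ_inv[OF R] by auto
    have xc: "x \<in> carrier_vec n" "y \<in> carrier_vec n" using xy L_def L0_carrier by auto
    have "x = Ri *\<^sub>v (transpose_mat (rep C) *\<^sub>v x)"
      using assoc_mult_mat_vec[OF Ri(1) GLZ_carrier[OF R] xc(1)] Ri(3) xc by simp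
    also have "\<dots> = Ri *\<^sub>v (transpose_mat (rep C) *\<^sub>v y)" using xy by simp
    also have "\<dots> = y"
      using assoc_mult_mat_vec[OF Ri(1) GLZ_carrier[OF R] xc(2)] Ri(3) xc by simp
    finally show "x = y" .
  qed
  have imgV: "(\<lambda>v. transpose_mat (rep C) *\<^sub>v v) ` L \<subseteq> V" if C: "C \<in> T" for C
    using GLZ_carrier[OF repG[OF C]] L0_carrier unfolding V_def L_def by auto
  have Pimg: "P n p i j mu (rep C) \<longleftrightarrow> mu \<in> (\<lambda>v. transpose_mat (rep C) *\<^sub>v v) ` L" for C mu
    unfolding P_def L_def ..
  have inner: "(\<Sum>\<^sub>\<infinity>v \<in> L. B (transpose_mat (rep C) *\<^sub>v v)) = infsum (f C) V" if C: "C \<in> T" for C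
  proof -
    have "(\<Sum>\<^sub>\<infinity>v \<in> L. B (transpose_mat (rep C) *\<^sub>v v)) = infsum B ((\<lambda>v. transpose_mat (rep C) *\<^sub>v v) ` L)"
      using infsum_reindex[OF inj[OF C], of B] by (simp add: comp_def)
    also have "\<dots> = infsum (f C) V"
      by (rule infsum_cong_neutral) (use imgV[OF C] in \<open>auto simp: f_def Pimg\<close>)
    finally show ?thesis .
  qed
  have nsum: "(\<lambda>mu. norm (f C mu)) summable_on V" if C: "C \<in> T" for C
  proof -
    have "(\<lambda>v. norm (B (transpose_mat (rep C) *\<^sub>v v))) summable_on L"
      using assms(5) C unfolding T_def H_def L_def by blast
    then have "(\<lambda>mu. norm (B mu)) summable_on ((\<lambda>v. transpose_mat (rep C) *\<^sub>v v) ` L)"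
      using summable_on_reindex[OF inj[OF C], of "\<lambda>mu. norm (B mu)"] by (simp add: comp_def)
    then show ?thesis
      by (rule summable_on_cong_neutral[THEN iffD1, rotated -1]) (use imgV[OF C] in \<open>auto simp: f_def Pimg\<close>)
  qed
  have fsum: "f C summable_on V" if "C \<in> T" for C using abs_summable_summable nsum[OF that] by blast
  define g where "g mu = of_nat (N mu) * B mu" for mu
  have sumf: "(\<Sum>C\<in>T. f C mu) = g mu" for mu
  proof -
    have "(\<Sum>C\<in>T. f C mu) = (\<Sum>C\<in>{C \<in> T. P n p i j mu (rep C)}. B mu)"
      unfolding f_def using sum.inter_filter[OF fT, of "\<lambda>_. B mu"] by simp
    then show ?thesis unfolding g_def N_def by simp
  qed
  have sumnf: "(\<Sum>C\<in>T. norm (f C mu)) = norm (g mu)" for mu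
  proof -
    have "(\<Sum>C\<in>T. norm (f C mu)) = (\<Sum>C\<in>T. if P n p i j mu (rep C) then norm (B mu) else 0)"
      unfolding f_def by (rule sum.cong) auto
    also have "\<dots> = (\<Sum>C\<in>{C \<in> T. P n p i j mu (rep C)}. norm (B mu))"
      using sum.inter_filter[OF fT, of "\<lambda>_. norm (B mu)"] by simp
    finally have "(\<Sum>C\<in>T. norm (f C mu)) = (\<Sum>C\<in>{C \<in> T. P n p i j mu (rep C)}. norm (B mu))" .
    then show ?thesis unfolding g_def N_def by (simp add: norm_mult)
  qed
  have LHS: "(\<Sum>C\<in>T. \<Sum>\<^sub>\<infinity>v \<in> L. B (transpose_mat (rep C) *\<^sub>v v)) = infsum g V"
  proof -
    have "(\<Sum>C\<in>T. \<Sum>\<^sub>\<infinity>v \<in> L. B (transpose_mat (rep C) *\<^sub>v v)) = (\<Sum>C\<in>T. infsum (f C) V)"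
      using inner by simp
    also have "\<dots> = infsum (\<lambda>mu. \<Sum>C\<in>T. f C mu) V"
      using infsum_finite_sum[OF fT fsum] by simp
    finally show ?thesis using sumf by simp
  qed
  have gabs: "(\<lambda>mu. norm (g mu)) summable_on V"
    using infsum_finite_sum[of T "\<lambda>C mu. norm (f C mu)" V] fT nsum sumnf by simp
  define t0 where "t0 mu = of_int a0 * B mu" for mu
  define t1 where "t1 mu = of_int a1 * (if D1 mu then B mu else 0)" for mu
  define t2 where "t2 mu = of_int a2 * (if D2 mu then B mu else 0)" for mu
  have gt: "g mu = t0 mu + t1 mu + t2 mu" if "mu \<in> V" for mu
  proof -
    have "(of_nat (N mu) :: complex) = of_int (int (N mu))" by simp
    also have "\<dots> = of_int a0 + of_int a1 * (if D1 mu then 1 else 0) + of_int a2 * (if D2 mu then 1 else 0)"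
      unfolding Nint[OF that] by simp
    finally show ?thesis unfolding g_def t0_def t1_def t2_def by (simp add: distrib_right)
  qed
  have ng: "norm (g mu) = real (N mu) * norm (B mu)" for mu unfolding g_def by (simp add: norm_mult)
  have t0s: "t0 summable_on V"
  proof (rule abs_summable_summable, rule abs_summable_on_comparison_test'[OF gabs])
    fix mu assume "mu \<in> V"
    have "norm (t0 mu) = real_of_int a0 * norm (B mu)" unfolding t0_def using a_nonneg by (simp add: norm_mult)
    also have "\<dots> \<le> norm (g mu)" unfolding ng
      by (rule mult_right_mono) (use Nge(1)[OF \<open>mu \<in> V\<close>] in auto)
    finally show "norm (t0 mu) \<le> norm (g mu)" .
  qed
  have t1s: "t1 summable_on V"
  proof (rule abs_summable_summable, rule abs_summable_on_comparison_test'[OF gabs])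
    fix mu assume "mu \<in> V"
    have "norm (t1 mu) = real_of_int (a1 * (if D1 mu then 1 else 0)) * norm (B mu)" unfolding t1_def using a_nonneg by (simp add: norm_mult)
    also have "\<dots> \<le> norm (g mu)" unfolding ng
      by (rule mult_right_mono) (use Nge(2)[OF \<open>mu \<in> V\<close>] in auto)
    finally show "norm (t1 mu) \<le> norm (g mu)" .
  qed
  have t2s: "t2 summable_on V"
  proof (rule abs_summable_summable, rule abs_summable_on_comparison_test'[OF gabs])
    fix mu assume "mu \<in> V"
    have "norm (t2 mu) = real_of_int (a2 * (if D2 mu then 1 else 0)) * norm (B mu)" unfolding t2_def using a_nonneg by (simp add: norm_mult)
    also have "\<dots> \<le> norm (g mu)" unfolding ng
      by (rule mult_right_mono) (use Nge(3)[OF \<open>mu \<in> V\<close>] in auto)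
    finally show "norm (t2 mu) \<le> norm (g mu)" .
  qed
  have split: "infsum g V = infsum t0 V + infsum t1 V + infsum t2 V"
  proof -
    have "infsum g V = infsum (\<lambda>mu. t0 mu + t1 mu + t2 mu) V" by (rule infsum_cong) (use gt in auto)
    also have "\<dots> = infsum (\<lambda>mu. t0 mu + t1 mu) V + infsum t2 V"
      by (rule infsum_add[OF summable_on_add[OF t0s t1s] t2s])
    also have "infsum (\<lambda>mu. t0 mu + t1 mu) V = infsum t0 V + infsum t1 V"
      by (rule infsum_add[OF t0s t1s])
    finally show ?thesis .
  qed
  have scaled: "(\<Sum>\<^sub>\<infinity>mu \<in> V. if (\<forall>k<n. q dvd mu $ k) then B mu else 0) = (\<Sum>\<^sub>\<infinity>v \<in> V. B (q \<cdot>\<^sub>v v))"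
    if q: "q \<noteq> 0" for q :: int
  proof -
    have injq: "inj_on (\<lambda>v. q \<cdot>\<^sub>v v) V"
    proof (rule inj_onI)
      fix x y assume "x \<in> V" "y \<in> V" "q \<cdot>\<^sub>v x = q \<cdot>\<^sub>v y"
      then show "x = y" unfolding V_def
        by (metis (no_types, lifting) carrier_vecD eq_vecI index_smult_vec(1,2) mult_cancel_left q)
    qed
    have img: "(\<lambda>v. q \<cdot>\<^sub>v v) ` V = {mu \<in> V. \<forall>k<n. q dvd mu $ k}"
    proof
      show "(\<lambda>v. q \<cdot>\<^sub>v v) ` V \<subseteq> {mu \<in> V. \<forall>k<n. q dvd mu $ k}" unfolding V_def by auto
    next
      show "{mu \<in> V. \<forall>k<n. q dvd mu $ k} \<subseteq> (\<lambda>v. q \<cdot>\<^sub>v v) ` V"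
      proof clarify
        fix mu assume mu: "mu \<in> V" "\<forall>k<n. q dvd mu $ k"
        have "mu = q \<cdot>\<^sub>v vec n (\<lambda>k. mu $ k div q)"
          by (rule eq_vecI) (use mu in \<open>auto simp: V_def\<close>)
        moreover have "vec n (\<lambda>k. mu $ k div q) \<in> V" unfolding V_def by simp
        ultimately show "mu \<in> (\<lambda>v. q \<cdot>\<^sub>v v) ` V" by blast
      qed
    qed
    have "(\<Sum>\<^sub>\<infinity>v \<in> V. B (q \<cdot>\<^sub>v v)) = infsum B ((\<lambda>v. q \<cdot>\<^sub>v v) ` V)"
      using infsum_reindex[OF injq, of B] by (simp add: comp_def)
    also have "\<dots> = (\<Sum>\<^sub>\<infinity>mu \<in> V. if (\<forall>k<n. q dvd mu $ k) then B mu else 0)"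
      unfolding img by (rule infsum_cong_neutral) auto
    finally show ?thesis by simp
  qed
  have I0: "infsum t0 V = of_int a0 * (\<Sum>\<^sub>\<infinity>v \<in> V. B v)"
    unfolding t0_def by (rule infsum_cmult_right')
  have I1: "infsum t1 V = of_int a1 * (\<Sum>\<^sub>\<infinity>v \<in> V. B (int p \<cdot>\<^sub>v v))"
    unfolding t1_def infsum_cmult_right' D1_def using scaled[of "int p"] p0 by simp
  have I2: "infsum t2 V = of_int a2 * (\<Sum>\<^sub>\<infinity>v \<in> V. B (int p ^ 2 \<cdot>\<^sub>v v))"
    unfolding t2_def infsum_cmult_right' D2_def using scaled[of "int p ^ 2"] p0 by simp
  show ?thesis
  proof (intro exI conjI)
    show "a0 + a1 + a2 = int (card (cosets (Hgrp n p i j) (GLZ n)))" unfolding a0_def a1_def a2_def c_def T_def H_def by simp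
    show "a0 + a1 = int (card (cosets (Hgrp n p i j) (S1 n p i)))" unfolding a0_def a1_def c1_def H_def by simp
    show "a0 = int (card (cosets (Hgrp n p i j) (S2 n p i j)))" unfolding a0_def c2_def H_def by simp
    show "(\<Sum>C \<in> cosets (Hgrp n p i j) (GLZ n). \<Sum>\<^sub>\<infinity>v \<in> L0 n p i j. B (transpose_mat (rep C) *\<^sub>v v))
     = of_int a0 * (\<Sum>\<^sub>\<infinity>v \<in> carrier_vec n. B v)
     + of_int a1 * (\<Sum>\<^sub>\<infinity>v \<in> carrier_vec n. B (int p \<cdot>\<^sub>v v))
     + of_int a2 * (\<Sum>\<^sub>\<infinity>v \<in> carrier_vec n. B (int p ^ 2 \<cdot>\<^sub>v v))"
      using LHS split I0 I1 I2 unfolding T_def H_def L_def V_def by simp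
  qed
qed

end
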